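(* The homomorphism of graded $\mathbb{C}$-algebras $$\mathbb{C}[b,\sigma_1,\rho,\sigma_2,\tau,\sigma_3]/\big(\tau^2-\rho\sigma_2,\ \tau\sigma_3,\ \rho\sigma_3\big)\longrightarrow \mathbb{C}[b,q_1,q_2,q_3,\ell_1,\ell_2,\ell_3]/(q_1\ell_1,q_2\ell_2,q_3\ell_3)$$ defined by $b\mapsto b$, $\sigma_1\mapsto\ell_1+\ell_2+\ell_3$, $\rho\mapsto q_1^2+q_2^2+q_3^2-2(q_1q_2+q_1q_3+q_2q_3)$, $\sigma_2\mapsto\ell_1^2+\ell_2^2+\ell_3^2-2(\ell_1\ell_2+\ell_1\ell_3+\ell_2\ell_3)$, $\tau\mapsto\ell_1(q_3-q_2)+\ell_2(q_1-q_3)+\ell_3(q_2-q_1)$, $\sigma_3\mapsto\ell_1\ell_2\ell_3$ is injective. Moreover the Hilbert series of the source is $$\frac{1+u+2u^2+2u^3+2u^4}{(1-u)(1-u^2)^2(1-u^3)}.$$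
   Context: Gradings: $\deg b=\deg\sigma_1=1$, $\deg\rho=\deg\sigma_2=\deg\tau=2$, $\deg\sigma_3=3$ in the source; $b,q_i,\ell_i$ all of degree $1$ in the target. *)

theory Defs
  imports Complex_Main "HOL-Library.Poly_Mapping" "HOL-Computational_Algebra.Formal_Power_Series"
begin

text \<open>Multivariate polynomials over the complex numbers in variables of type 'v:
  finitely supported maps from monomials (exponent vectors) to coefficients.\<close>
type_synonym 'v cpoly = "('v \<Rightarrow>\<^sub>0 nat) \<Rightarrow>\<^sub>0 complex"

definition Var :: "'v \<Rightarrow> 'v cpoly" where
  "Var v = Poly_Mapping.single (Poly_Mapping.single v 1) 1"

definition Const :: "complex \<Rightarrow> 'v cpoly" where
  "Const c = Poly_Mapping.single 0 c"

definition smult_cp :: "complex \<Rightarrow> 'v cpoly \<Rightarrow> 'v cpoly" where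
  "smult_cp c p = Const c * p"

definition mon_eval :: "('v \<Rightarrow> 'w cpoly) \<Rightarrow> ('v \<Rightarrow>\<^sub>0 nat) \<Rightarrow> 'w cpoly" where
  "mon_eval f mo = (\<Prod>v\<in>Poly_Mapping.keys mo. f v ^ Poly_Mapping.lookup mo v)"

definition subst_cp :: "('v \<Rightarrow> 'w cpoly) \<Rightarrow> 'v cpoly \<Rightarrow> 'w cpoly" where
  "subst_cp f p = (\<Sum>mo\<in>Poly_Mapping.keys p. Const (Poly_Mapping.lookup p mo) * mon_eval f mo)"

definition in_ideal :: "'v cpoly list \<Rightarrow> 'v cpoly \<Rightarrow> bool" where
  "in_ideal gs p \<longleftrightarrow> (\<exists>c. p = (\<Sum>i<length gs. c i * gs ! i))"

definition wdeg :: "('v \<Rightarrow> nat) \<Rightarrow> ('v \<Rightarrow>\<^sub>0 nat) \<Rightarrow> nat" where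
  "wdeg w m = (\<Sum>v\<in>Poly_Mapping.keys m. Poly_Mapping.lookup m v * w v)"

definition homog_part :: "('v \<Rightarrow> nat) \<Rightarrow> nat \<Rightarrow> 'v cpoly set" where
  "homog_part w d = {p. \<forall>m\<in>Poly_Mapping.keys p. wdeg w m = d}"

definition hilb_fun :: "('v \<Rightarrow> nat) \<Rightarrow> 'v cpoly list \<Rightarrow> nat \<Rightarrow> nat" where
  "hilb_fun w gs d =
     vector_space.dim smult_cp (homog_part w d)
     - vector_space.dim smult_cp (homog_part w d \<inter> {p. in_ideal gs p})"

datatype src = B | Sig1 | Rho | Sig2 | Tau | Sig3
datatype tgt = TB | Q1 | Q2 | Q3 | L1 | L2 | L3

fun src_wt :: "src \<Rightarrow> nat" where
  "src_wt B = 1" | "src_wt Sig1 = 1" | "src_wt Rho = 2" | "src_wt Sig2 = 2"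
| "src_wt Tau = 2" | "src_wt Sig3 = 3"

definition src_rels :: "src cpoly list" where
  "src_rels = [Var Tau ^ 2 - Var Rho * Var Sig2, Var Tau * Var Sig3, Var Rho * Var Sig3]"

definition tgt_rels :: "tgt cpoly list" where
  "tgt_rels = [Var Q1 * Var L1, Var Q2 * Var L2, Var Q3 * Var L3]"

fun phi :: "src \<Rightarrow> tgt cpoly" where
  "phi B = Var TB"
| "phi Sig1 = Var L1 + Var L2 + Var L3"
| "phi Rho = Var Q1 ^ 2 + Var Q2 ^ 2 + Var Q3 ^ 2
     - 2 * (Var Q1 * Var Q2 + Var Q1 * Var Q3 + Var Q2 * Var Q3)"
| "phi Sig2 = Var L1 ^ 2 + Var L2 ^ 2 + Var L3 ^ 2
     - 2 * (Var L1 * Var L2 + Var L1 * Var L3 + Var L2 * Var L3)"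
| "phi Tau = Var L1 * (Var Q3 - Var Q2) + Var L2 * (Var Q1 - Var Q3) + Var L3 * (Var Q2 - Var Q1)"
| "phi Sig3 = Var L1 * Var L2 * Var L3"

end

theory Submission
  imports Defs "HOL-Computational_Algebra.Fundamental_Theorem_Algebra"
begin

lemma pm_expand:
  "(p :: 'a \<Rightarrow>\<^sub>0 'b::comm_monoid_add) = (\<Sum>m\<in>Poly_Mapping.keys p. Poly_Mapping.single m (Poly_Mapping.lookup p m))"
proof (rule poly_mapping_eqI)
  fix k
  have "Poly_Mapping.lookup (\<Sum>m\<in>Poly_Mapping.keys p. Poly_Mapping.single m (Poly_Mapping.lookup p m)) k
     = (\<Sum>m\<in>Poly_Mapping.keys p. (if m = k then Poly_Mapping.lookup p m else 0))"
    by (simp add: lookup_sum lookup_single when_def)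
  also have "\<dots> = Poly_Mapping.lookup p k"
    by (simp add: sum.delta in_keys_iff)
  finally show "Poly_Mapping.lookup p k = Poly_Mapping.lookup (\<Sum>m\<in>Poly_Mapping.keys p. Poly_Mapping.single m (Poly_Mapping.lookup p m)) k" by simp
qed

definition pw :: "('v \<Rightarrow> 'b::comm_monoid_mult) \<Rightarrow> ('v \<Rightarrow>\<^sub>0 nat) \<Rightarrow> 'b" where
  "pw F m = (\<Prod>v\<in>Poly_Mapping.keys m. F v ^ Poly_Mapping.lookup m v)"

lemma pw_superset:
  assumes "finite S" "Poly_Mapping.keys m \<subseteq> S"
  shows "pw F m = (\<Prod>v\<in>S. F v ^ Poly_Mapping.lookup m v)"
  unfolding pw_def
  by (rule prod.mono_neutral_left) (use assms in \<open>auto simp: in_keys_iff\<close>)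

lemma pw_add: "pw F (m + n) = pw F m * pw F n"
proof -
  let ?S = "Poly_Mapping.keys m \<union> Poly_Mapping.keys n"
  have "pw F (m + n) = (\<Prod>v\<in>?S. F v ^ Poly_Mapping.lookup (m + n) v)"
    by (rule pw_superset) (auto dest: keys_add[THEN subsetD])
  also have "\<dots> = (\<Prod>v\<in>?S. F v ^ Poly_Mapping.lookup m v * F v ^ Poly_Mapping.lookup n v)"
    by (simp add: lookup_add power_add)
  also have "\<dots> = pw F m * pw F n"
    by (simp add: prod.distrib pw_superset[of ?S])
  finally show ?thesis .
qed

lemma pw_zero [simp]: "pw F 0 = 1"
  by (simp add: pw_def)

lemma pw_single [simp]: "pw F (Poly_Mapping.single v k) = F v ^ k"
  by (simp add: pw_def)

locale lh =
  fixes h :: "complex \<Rightarrow> 'b::comm_ring_1" and g :: "('v \<Rightarrow>\<^sub>0 nat) \<Rightarrow> 'b"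
  assumes h0: "h 0 = 0" and h1: "h 1 = 1" and hadd: "\<And>a b. h (a + b) = h a + h b"
    and hmul: "\<And>a b. h (a * b) = h a * h b"
    and g0: "g 0 = 1" and gadd: "\<And>m n. g (m + n) = g m * g n"
begin

definition L :: "'v cpoly \<Rightarrow> 'b" where
  "L p = (\<Sum>m\<in>Poly_Mapping.keys p. h (Poly_Mapping.lookup p m) * g m)"

lemma L_superset:
  assumes "finite S" "Poly_Mapping.keys p \<subseteq> S"
  shows "L p = (\<Sum>m\<in>S. h (Poly_Mapping.lookup p m) * g m)"
  unfolding L_def
  by (rule sum.mono_neutral_left) (use assms in \<open>auto simp: in_keys_iff h0\<close>)

lemma L_add: "L (p + q) = L p + L q"
proof -
  let ?S = "Poly_Mapping.keys p \<union> Poly_Mapping.keys q"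
  have "L (p + q) = (\<Sum>m\<in>?S. h (Poly_Mapping.lookup (p + q) m) * g m)"
    by (rule L_superset) (auto dest: keys_add[THEN subsetD])
  also have "\<dots> = (\<Sum>m\<in>?S. h (Poly_Mapping.lookup p m) * g m + h (Poly_Mapping.lookup q m) * g m)"
    by (simp add: lookup_add hadd algebra_simps)
  also have "\<dots> = L p + L q"
    by (simp add: sum.distrib L_superset[of ?S])
  finally show ?thesis .
qed

lemma L_zero [simp]: "L 0 = 0"
  by (simp add: L_def)

lemma L_single [simp]: "L (Poly_Mapping.single m a) = h a * g m"
  by (simp add: L_def h0)

lemma L_sum: "L (sum f I) = (\<Sum>i\<in>I. L (f i))"
  by (induction I rule: infinite_finite_induct) (simp_all add: L_add)

lemma L_mult: "L (p * q) = L p * L q"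
proof -
  have "p * q = (\<Sum>m\<in>Poly_Mapping.keys p. Poly_Mapping.single m (Poly_Mapping.lookup p m))
     * (\<Sum>n\<in>Poly_Mapping.keys q. Poly_Mapping.single n (Poly_Mapping.lookup q n))"
    by (simp flip: pm_expand)
  also have "\<dots> = (\<Sum>m\<in>Poly_Mapping.keys p. \<Sum>n\<in>Poly_Mapping.keys q.
      Poly_Mapping.single (m + n) (Poly_Mapping.lookup p m * Poly_Mapping.lookup q n))"
    by (simp add: sum_product mult_single)
  finally have "L (p * q) = (\<Sum>m\<in>Poly_Mapping.keys p. \<Sum>n\<in>Poly_Mapping.keys q.
      (h (Poly_Mapping.lookup p m) * g m) * (h (Poly_Mapping.lookup q n) * g n))"
    by (simp add: L_sum hmul gadd algebra_simps)
  also have "\<dots> = L p * L q"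
    by (simp add: L_def sum_product)
  finally show ?thesis .
qed

lemma L_uminus: "L (- p) = - L p"
proof -
  have "L (p + - p) = 0" by simp
  then show ?thesis by (simp only: L_add) (simp add: eq_neg_iff_add_eq_0 add.commute)
qed

lemma L_diff: "L (p - q) = L p - L q"
  by (simp only: diff_conv_add_uminus L_add L_uminus)

lemma L_one [simp]: "L 1 = 1"
  by (simp flip: single_one add: h1 g0)

lemma L_pow: "L (p ^ n) = L p ^ n"
  by (induction n) (simp_all add: L_mult)

lemma L_prod: "L (prod f I) = (\<Prod>i\<in>I. L (f i))"
  by (induction I rule: infinite_finite_induct) (simp_all add: L_mult)

end

lemma Const_add: "Const (a + b) = Const a + Const b"
  by (simp add: Const_def single_add)
lemma Const_mult: "Const (a * b) = Const a * Const b"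
  by (simp add: Const_def mult_single)
lemma Const_0 [simp]: "Const 0 = 0"
  by (simp add: Const_def)
lemma Const_1 [simp]: "Const 1 = 1"
  by (simp add: Const_def)

lemma lh_subst: "lh Const (mon_eval f)"
  by unfold_locales (simp_all add: Const_add Const_mult mon_eval_def pw_add[unfolded pw_def])

lemma subst_L: "subst_cp f = lh.L Const (mon_eval f)"
  by (simp add: fun_eq_iff subst_cp_def lh.L_def[OF lh_subst])

definition ev :: "('v \<Rightarrow> complex) \<Rightarrow> 'v cpoly \<Rightarrow> complex" where
  "ev x p = (\<Sum>m\<in>Poly_Mapping.keys p. Poly_Mapping.lookup p m * pw x m)"

lemma lh_ev: "lh (\<lambda>c. c) (pw x)"
  by unfold_locales (simp_all add: pw_add)

lemma ev_L: "ev x = lh.L (\<lambda>c. c) (pw x)"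
  by (simp add: fun_eq_iff ev_def lh.L_def[OF lh_ev])

lemma ev_add [simp]: "ev x (p + q) = ev x p + ev x q"
  and ev_mult [simp]: "ev x (p * q) = ev x p * ev x q"
  and ev_diff [simp]: "ev x (p - q) = ev x p - ev x q"
  and ev_uminus [simp]: "ev x (- p) = - ev x p"
  and ev_pow [simp]: "ev x (p ^ n) = ev x p ^ n"
  and ev_one [simp]: "ev x 1 = 1"
  and ev_zero [simp]: "ev x 0 = 0"
  and ev_sum: "ev x (sum f I) = (\<Sum>i\<in>I. ev x (f i))"
  and ev_prod: "ev x (prod f I) = (\<Prod>i\<in>I. ev x (f i))"
  by (simp_all add: ev_L lh.L_add[OF lh_ev] lh.L_mult[OF lh_ev] lh.L_diff[OF lh_ev]
     lh.L_uminus[OF lh_ev] lh.L_pow[OF lh_ev] lh.L_one[OF lh_ev] lh.L_sum[OF lh_ev] lh.L_prod[OF lh_ev] lh.L_zero[OF lh_ev])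

lemma ev_single [simp]: "ev x (Poly_Mapping.single m c) = c * pw x m"
  by (simp add: ev_L lh.L_single[OF lh_ev])

lemma ev_Var [simp]: "ev x (Var v) = x v"
  by (simp add: Var_def)

lemma ev_Const [simp]: "ev x (Const c) = c"
  by (simp add: Const_def)

lemma ev_of_nat [simp]: "ev x (of_nat n) = of_nat n"
  by (induction n) simp_all

lemma ev_numeral [simp]: "ev x (numeral n) = numeral n"
  by (metis ev_of_nat of_nat_numeral)

lemma subst_add [simp]: "subst_cp f (p + q) = subst_cp f p + subst_cp f q"
  and subst_mult [simp]: "subst_cp f (p * q) = subst_cp f p * subst_cp f q"
  and subst_diff [simp]: "subst_cp f (p - q) = subst_cp f p - subst_cp f q"
  and subst_pow [simp]: "subst_cp f (p ^ n) = subst_cp f p ^ n"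
  and subst_sum: "subst_cp f (sum F I) = (\<Sum>i\<in>I. subst_cp f (F i))"
  by (simp_all add: subst_L lh.L_add[OF lh_subst] lh.L_mult[OF lh_subst] lh.L_diff[OF lh_subst]
     lh.L_pow[OF lh_subst] lh.L_sum[OF lh_subst])

lemma subst_Var [simp]: "subst_cp f (Var v) = f v"
  by (simp add: subst_L lh.L_single[OF lh_subst] Var_def mon_eval_def)

lemma ev_subst: "ev x (subst_cp f p) = ev (\<lambda>v. ev x (f v)) p"
proof -
  have "ev x (subst_cp f p) = (\<Sum>m\<in>Poly_Mapping.keys p. Poly_Mapping.lookup p m * ev x (mon_eval f m))"
    by (simp add: subst_cp_def ev_sum)
  also have "\<dots> = (\<Sum>m\<in>Poly_Mapping.keys p. Poly_Mapping.lookup p m * pw (\<lambda>v. ev x (f v)) m)"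
    by (simp add: mon_eval_def pw_def ev_prod)
  also have "\<dots> = ev (\<lambda>v. ev x (f v)) p"
    by (simp only: ev_def)
  finally show ?thesis .
qed

lemma pm_split_var:
  fixes m :: "'v \<Rightarrow>\<^sub>0 nat"
  shows "m = (m - Poly_Mapping.single w (Poly_Mapping.lookup m w)) + Poly_Mapping.single w (Poly_Mapping.lookup m w)"
  by (rule poly_mapping_eqI) (simp add: lookup_add lookup_minus lookup_single when_def)

lemma keys_split_var:
  fixes m :: "'v \<Rightarrow>\<^sub>0 nat"
  shows "Poly_Mapping.keys (m - Poly_Mapping.single w (Poly_Mapping.lookup m w)) \<subseteq> Poly_Mapping.keys m - {w}"
  by (auto simp: in_keys_iff lookup_minus lookup_single when_def split: if_splits)

lemma pw_cong_keys:
  assumes "\<And>v. v \<in> Poly_Mapping.keys m \<Longrightarrow> x v = y v"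
  shows "pw x m = pw y m"
  unfolding pw_def using assms by (intro prod.cong) auto

lemma ident_aux:
  fixes c :: "'i \<Rightarrow> complex" and g :: "'i \<Rightarrow> ('v \<Rightarrow>\<^sub>0 nat)"
  assumes "finite V"
  shows "finite K \<Longrightarrow> inj_on g K \<Longrightarrow> (\<forall>i\<in>K. Poly_Mapping.keys (g i) \<subseteq> V) \<Longrightarrow>
    (\<forall>x. (\<forall>v. x v \<noteq> 0) \<longrightarrow> (\<Sum>i\<in>K. c i * pw x (g i)) = 0) \<Longrightarrow> \<forall>i\<in>K. c i = 0"
  using assms
proof (induction V arbitrary: K g rule: finite_induct)
  case empty
  then have g0: "\<forall>i\<in>K. g i = 0" by auto
  show ?case
  proof
    fix i assume i: "i \<in> K"
    have "K = {i}" using g0 empty.prems(2) i by (auto simp: inj_on_def)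
    then show "c i = 0" using empty.prems(4) g0 i by (auto elim: allE[of _ "\<lambda>_. 1"])
  qed
next
  case (insert w V0)
  define e where "e i = Poly_Mapping.lookup (g i) w" for i
  define g' where "g' i = g i - Poly_Mapping.single w (e i)" for i
  have gsplit: "g i = g' i + Poly_Mapping.single w (e i)" for i
    unfolding g'_def e_def by (rule pm_split_var)
  have keys': "Poly_Mapping.keys (g' i) \<subseteq> V0" if "i \<in> K" for i
    using keys_split_var[of "g i" w] insert.prems(3) that unfolding g'_def e_def by blast
  have pwg: "pw x (g i) = pw x (g' i) * x w ^ e i" for x i
    by (subst gsplit) (simp add: pw_add)
  define n where "n = Max (e ` K)"
  have en: "e i \<le> n" if "i \<in> K" for i
    unfolding n_def using insert.prems(1) that by simp
  have claim: "(\<Sum>i\<in>{i\<in>K. e i = k}. c i * pw x (g' i)) = 0" if x: "\<forall>v. x v \<noteq> 0" for x k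
  proof -
    define a where "a k = (\<Sum>i\<in>{i\<in>K. e i = k}. c i * pw x (g' i))" for k
    have eq: "(\<Sum>i\<in>K. c i * pw (x(w := z)) (g i)) = (\<Sum>k\<le>n. a k * z ^ k)" for z
    proof -
      have "(\<Sum>i\<in>K. c i * pw (x(w := z)) (g i)) = (\<Sum>i\<in>K. c i * pw x (g' i) * z ^ e i)"
      proof (rule sum.cong[OF refl])
        fix i assume "i \<in> K"
        then have "pw (x(w := z)) (g' i) = pw x (g' i)"
          using keys'[of i] insert.hyps(2) by (intro pw_cong_keys) auto
        then show "c i * pw (x(w := z)) (g i) = c i * pw x (g' i) * z ^ e i"
          by (simp add: pwg)
      qed
      also have "\<dots> = (\<Sum>k\<le>n. \<Sum>i\<in>{i\<in>K. e i = k}. c i * pw x (g' i) * z ^ e i)"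
        by (rule sum.group[symmetric]) (use insert.prems(1) en in auto)
      also have "\<dots> = (\<Sum>k\<le>n. a k * z ^ k)"
        unfolding a_def by (simp add: sum_distrib_right)
      finally show ?thesis .
    qed
    have "\<forall>z. z \<noteq> 0 \<longrightarrow> (\<Sum>k\<le>n. a k * z ^ k) = 0"
    proof (intro allI impI)
      fix z :: complex assume "z \<noteq> 0"
      then have "\<forall>v. (x(w := z)) v \<noteq> 0" using x by auto
      then show "(\<Sum>k\<le>n. a k * z ^ k) = 0" using insert.prems(4) eq by metis
    qed
    then have "UNIV - {0} \<subseteq> {z. (\<Sum>k\<le>n. a k * z ^ k) = 0}" by auto
    moreover have "infinite (UNIV - {0::complex})"
      by (simp add: infinite_UNIV_char_0)
    ultimately have "infinite {z. (\<Sum>k\<le>n. a k * z ^ k) = 0}"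
      using finite_subset by blast
    then have "\<forall>k\<le>n. a k = 0" using polyfun_finite_roots[where c=a and n=n] by blast
    moreover have "a k = 0" if "k > n"
    proof -
      have "{i\<in>K. e i = k} = {}" using en that by force
      then show ?thesis unfolding a_def by (metis (no_types, lifting) sum.empty)
    qed
    ultimately show ?thesis unfolding a_def by (meson not_le)
  qed
  show ?case
  proof
    fix i assume i: "i \<in> K"
    let ?K = "{j\<in>K. e j = e i}"
    have "inj_on g' ?K"
    proof (rule inj_onI)
      fix j1 j2 assume "j1 \<in> ?K" "j2 \<in> ?K" "g' j1 = g' j2"
      then have "g j1 = g j2" using gsplit[of j1] gsplit[of j2] by simp
      then show "j1 = j2" using insert.prems(2) \<open>j1 \<in> ?K\<close> \<open>j2 \<in> ?K\<close> by (auto simp: inj_on_def)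
    qed
    then have "\<forall>j\<in>?K. c j = 0"
      using insert.IH[of ?K g'] insert.prems(1) keys' claim by auto
    then show "c i = 0" using i by auto
  qed
qed

lemma ident:
  fixes c :: "'i \<Rightarrow> complex" and g :: "'i \<Rightarrow> ('v \<Rightarrow>\<^sub>0 nat)"
  assumes "finite K" "inj_on g K"
    "\<And>x. (\<forall>v. x v \<noteq> 0) \<Longrightarrow> (\<Sum>i\<in>K. c i * pw x (g i)) = 0"
    "i \<in> K"
  shows "c i = 0"
proof -
  have "finite (\<Union>i\<in>K. Poly_Mapping.keys (g i))" using assms(1) by simp
  then show ?thesis
    using ident_aux[of "\<Union>i\<in>K. Poly_Mapping.keys (g i)" K g c] assms by blast
qed

abbreviation lk :: "('a \<Rightarrow>\<^sub>0 'b::zero) \<Rightarrow> 'a \<Rightarrow> 'b" where "lk \<equiv> Poly_Mapping.lookup"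
abbreviation ks :: "('a \<Rightarrow>\<^sub>0 'b::zero) \<Rightarrow> 'a set" where "ks \<equiv> Poly_Mapping.keys"
abbreviation sg :: "'a \<Rightarrow> 'b \<Rightarrow> ('a \<Rightarrow>\<^sub>0 'b::zero)" where "sg \<equiv> Poly_Mapping.single"

definition std :: "(src \<Rightarrow>\<^sub>0 nat) \<Rightarrow> bool" where
  "std m \<longleftrightarrow> lk m Tau \<le> 1 \<and> (lk m Sig3 \<ge> 1 \<longrightarrow> lk m Rho = 0 \<and> lk m Tau = 0)"

definition tgt_ok :: "(tgt \<Rightarrow> complex) \<Rightarrow> bool" where
  "tgt_ok y \<longleftrightarrow> y Q1 * y L1 = 0 \<and> y Q2 * y L2 = 0 \<and> y Q3 * y L3 = 0"

lemma cubic_roots: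
  fixes s e2 e3 :: complex
  shows "\<exists>l1 l2 l3. l1 + l2 + l3 = s \<and> l1 * l2 + l1 * l3 + l2 * l3 = e2 \<and> l1 * l2 * l3 = e3"
proof -
  have "\<exists>z. poly [:- e3, e2, - s, 1:] z = 0"
    by (rule fundamental_theorem_of_algebra_alt) auto
  then obtain l1 where root: "- e3 + l1 * (e2 + l1 * (- s + l1)) = 0" by auto
  define S where "S = s - l1"
  define P where "P = e2 - l1 * S"
  define r where "r = csqrt (S ^ 2 - 4 * P)"
  have r2: "r ^ 2 = S ^ 2 - 4 * P" by (simp add: r_def)
  define l2 where "l2 = (S + r) / 2"
  define l3 where "l3 = (S - r) / 2"
  have sum23: "l2 + l3 = S" by (simp add: l2_def l3_def field_simps)
  have "l2 * l3 = (S ^ 2 - r ^ 2) / 4" by (simp add: l2_def l3_def field_simps power2_eq_square)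
  then have prod23: "l2 * l3 = P" using r2 by simp
  have "l1 + (l2 + l3) = s" using sum23 by (simp add: S_def)
  then have "l1 + l2 + l3 = s" by (simp add: add.assoc)
  moreover have "l1 * l2 + l1 * l3 + l2 * l3 = e2"
  proof -
    have "l1 * l2 + l1 * l3 + l2 * l3 = l1 * (l2 + l3) + l2 * l3" by (simp add: distrib_left)
    also have "\<dots> = l1 * S + P" using sum23 prod23 by simp
    also have "\<dots> = e2" by (simp add: P_def)
    finally show ?thesis .
  qed
  moreover have "l1 * l2 * l3 = e3"
  proof -
    have "l1 * l2 * l3 = l1 * P" using prod23 by (simp add: mult.assoc)
    also have "\<dots> = l1 * (e2 + l1 * (- s + l1))" by (simp add: P_def S_def algebra_simps)
    also have "\<dots> = e3" using root by (simp add: neg_eq_iff_add_eq_0[symmetric])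
    finally show ?thesis .
  qed
  ultimately show ?thesis by blast
qed

lemma pointAB:
  fixes x :: "src \<Rightarrow> complex"
  assumes q: "q ^ 2 = x Rho" and d: "d ^ 2 = x Sig2"
  shows "\<exists>y. tgt_ok y \<and> (\<lambda>v. ev y (phi v)) = x(Tau := q * d, Sig3 := 0)"
proof -
  define y where "y v = (case v of TB \<Rightarrow> x B | Q1 \<Rightarrow> q | Q2 \<Rightarrow> 0 | Q3 \<Rightarrow> 0
     | L1 \<Rightarrow> 0 | L2 \<Rightarrow> (x Sig1 + d) / 2 | L3 \<Rightarrow> (x Sig1 - d) / 2)" for v
  have "tgt_ok y" by (simp add: tgt_ok_def y_def)
  moreover have "ev y (phi v) = (x(Tau := q * d, Sig3 := 0)) v" for v
  proof (cases v)
    case Rho then show ?thesis using q by (simp add: y_def)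
  next
    case Sig2
    have "((x Sig1 + d) / 2) ^ 2 + ((x Sig1 - d) / 2) ^ 2 - 2 * ((x Sig1 + d) / 2 * ((x Sig1 - d) / 2)) = d ^ 2"
      by (simp add: field_simps power2_eq_square)
    then show ?thesis using Sig2 d by (simp add: y_def)
  next
    case Tau
    have "(x Sig1 + d) / 2 * q + (x Sig1 - d) / 2 * (- q) = q * d"
      by (simp add: field_simps)
    then show ?thesis using Tau by (simp add: y_def)
  next
    case Sig1
    have "(x Sig1 + d) / 2 + (x Sig1 - d) / 2 = x Sig1" by (simp add: field_simps)
    then show ?thesis using Sig1 by (simp add: y_def)
  qed (simp_all add: y_def)
  ultimately show ?thesis by blast
qed

lemma pointC:
  fixes x :: "src \<Rightarrow> complex"
  shows "\<exists>y. tgt_ok y \<and> (\<lambda>v. ev y (phi v)) = x(Rho := 0, Tau := 0)"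
proof -
  obtain l1 l2 l3 where l: "l1 + l2 + l3 = x Sig1"
     "l1 * l2 + l1 * l3 + l2 * l3 = (x Sig1 ^ 2 - x Sig2) / 4" "l1 * l2 * l3 = x Sig3"
    using cubic_roots by blast
  define y where "y v = (case v of TB \<Rightarrow> x B | Q1 \<Rightarrow> 0 | Q2 \<Rightarrow> 0 | Q3 \<Rightarrow> 0
     | L1 \<Rightarrow> l1 | L2 \<Rightarrow> l2 | L3 \<Rightarrow> l3)" for v
  have "tgt_ok y" by (simp add: tgt_ok_def y_def)
  moreover have "ev y (phi v) = (x(Rho := 0, Tau := 0)) v" for v
  proof (cases v)
    case Sig2
    have "l1 ^ 2 + l2 ^ 2 + l3 ^ 2 - 2 * (l1 * l2 + l1 * l3 + l2 * l3)
        = (l1 + l2 + l3) ^ 2 - 4 * (l1 * l2 + l1 * l3 + l2 * l3)"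
      by (simp add: power2_eq_square algebra_simps)
    also have "\<dots> = x Sig1 ^ 2 - (x Sig1 ^ 2 - x Sig2)"
    proof -
      have "4 * (l1 * l2 + l1 * l3 + l2 * l3) = x Sig1 ^ 2 - x Sig2" using l(2) by (simp add: mult.commute)
      then show ?thesis using l(1) by simp
    qed
    also have "\<dots> = x Sig2" by simp
    finally show ?thesis using Sig2 by (simp add: y_def)
  qed (use l in \<open>simp_all add: y_def\<close>)
  ultimately show ?thesis by blast
qed

lemma pw_zero_factor:
  fixes x :: "'v \<Rightarrow> complex"
  assumes "v \<in> ks m" "x v = 0"
  shows "pw x m = 0"
  unfolding pw_def using assms by (intro prod_zero) (auto simp: in_keys_iff)

lemma core:
  fixes N :: "src cpoly"
  assumes stdk: "\<forall>m\<in>ks N. std m"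
    and van: "\<forall>y. tgt_ok y \<longrightarrow> ev (\<lambda>v. ev y (phi v)) N = 0"
  shows "N = 0"
proof -
  define K where "K = ks N"
  define c where "c = lk N"
  define KA where "KA = {m\<in>K. lk m Tau = 0 \<and> lk m Sig3 = 0}"
  define KB where "KB = {m\<in>K. lk m Tau = 1 \<and> lk m Sig3 = 0}"
  define KC where "KC = {m\<in>K. lk m Sig3 \<noteq> 0}"
  have finK: "finite K" by (simp add: K_def)
  have part: "K = KA \<union> (KB \<union> KC)"
    using stdk unfolding KA_def KB_def KC_def K_def std_def by force
  have disj: "KA \<inter> (KB \<union> KC) = {}" "KB \<inter> KC = {}"
    unfolding KA_def KB_def KC_def by auto
  have split: "(\<Sum>m\<in>K. f m) = (\<Sum>m\<in>KA. f m) + (\<Sum>m\<in>KB. f m) + (\<Sum>m\<in>KC. f m)" for f :: "_ \<Rightarrow> complex"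
  proof -
    have fin: "finite KA" "finite KB" "finite KC"
      using finK unfolding KA_def KB_def KC_def by auto
    show ?thesis
      by (subst part, subst sum.union_disjoint) (use fin disj in \<open>auto simp: sum.union_disjoint add.assoc\<close>)
  qed
  have evN: "ev z N = (\<Sum>m\<in>K. c m * pw z m)" for z
    by (simp add: ev_def K_def c_def)
  define g where "g m = m - sg Tau 1" for m :: "src \<Rightarrow>\<^sub>0 nat"
  have gB: "m = g m + sg Tau 1" if "m \<in> KB" for m
    using that unfolding g_def KB_def
    by (intro poly_mapping_eqI) (auto simp: lookup_add lookup_minus lookup_single when_def)
  have evAB: "ev (x(Tau := t, Sig3 := 0)) N
      = (\<Sum>m\<in>KA. c m * pw x m) + t * (\<Sum>m\<in>KB. c m * pw x (g m))" for x t
  proof -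
    let ?z = "x(Tau := t, Sig3 := 0)"
    have A: "pw ?z m = pw x m" if "m \<in> KA" for m
      using that unfolding KA_def by (intro pw_cong_keys) (auto simp: in_keys_iff)
    have B: "pw ?z m = t * pw x (g m)" if "m \<in> KB" for m
    proof -
      have l: "lk (g m) Tau = 0" "lk (g m) Sig3 = 0"
        using that unfolding KB_def g_def by (auto simp: lookup_minus lookup_single)
      have "pw ?z (g m) = pw x (g m)"
        using l by (intro pw_cong_keys) (auto simp: in_keys_iff)
      then show ?thesis by (subst gB[OF that]) (simp add: pw_add)
    qed
    have C: "pw ?z m = 0" if "m \<in> KC" for m
      using that unfolding KC_def by (intro pw_zero_factor[of Sig3]) (auto simp: in_keys_iff)
    show ?thesis
      by (simp add: evN split A B C sum_distrib_left mult.left_commute cong: sum.cong)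
  qed
  have AB: "(\<Sum>m\<in>KA. c m * pw x m) = 0 \<and> (\<Sum>m\<in>KB. c m * pw x (g m)) = 0"
    if x: "\<forall>v. x v \<noteq> 0" for x :: "src \<Rightarrow> complex"
  proof -
    define q where "q = csqrt (x Rho)"
    define d where "d = csqrt (x Sig2)"
    have q2: "q ^ 2 = x Rho" "(- q) ^ 2 = x Rho" by (simp_all add: q_def)
    have d2: "d ^ 2 = x Sig2" by (simp add: d_def)
    have qd: "q * d \<noteq> 0" using x by (simp add: q_def d_def)
    obtain y1 where y1: "tgt_ok y1" "(\<lambda>v. ev y1 (phi v)) = x(Tau := q * d, Sig3 := 0)"
      using pointAB[OF q2(1) d2] by blast
    obtain y2 where y2: "tgt_ok y2" "(\<lambda>v. ev y2 (phi v)) = x(Tau := (- q) * d, Sig3 := 0)"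
      using pointAB[OF q2(2) d2] by blast
    have e1: "(\<Sum>m\<in>KA. c m * pw x m) + (q * d) * (\<Sum>m\<in>KB. c m * pw x (g m)) = 0"
      using van y1 evAB by metis
    have e2: "(\<Sum>m\<in>KA. c m * pw x m) + ((- q) * d) * (\<Sum>m\<in>KB. c m * pw x (g m)) = 0"
      using van y2 evAB by metis
    from e1 e2 have sa: "(\<Sum>m\<in>KA. c m * pw x m) = 0"
      by (simp add: algebra_simps)
    with e1 have "(q * d) * (\<Sum>m\<in>KB. c m * pw x (g m)) = 0" by simp
    with qd sa show ?thesis by simp
  qed
  have finA: "finite KA" "finite KB" "finite KC" using finK unfolding KA_def KB_def KC_def by auto
  have cA: "c m = 0" if "m \<in> KA" for m
    by (rule ident[of KA "\<lambda>m. m" c m]) (use AB finA that in auto)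
  have injg: "inj_on g KB"
    by (rule inj_onI) (metis gB)
  have cB: "c m = 0" if "m \<in> KB" for m
    by (rule ident[of KB g c m]) (use AB finA that injg in auto)
  have cC: "c m = 0" if "m \<in> KC" for m
  proof (rule ident[of KC "\<lambda>m. m" c m])
    show "finite KC" "inj_on (\<lambda>m. m) KC" "m \<in> KC" using finA that by auto
    fix x :: "src \<Rightarrow> complex"
    obtain y where y: "tgt_ok y" "(\<lambda>v. ev y (phi v)) = x(Rho := 0, Tau := 0)"
      using pointC by blast
    have "0 = ev (x(Rho := 0, Tau := 0)) N" using van y by metis
    also have "\<dots> = (\<Sum>m\<in>KC. c m * pw (x(Rho := 0, Tau := 0)) m)"
      by (simp add: evN split cA cB)
    also have "\<dots> = (\<Sum>m\<in>KC. c m * pw x m)"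
    proof (rule sum.cong[OF refl])
      fix m assume m: "m \<in> KC"
      then have "std m" using stdk unfolding KC_def K_def by auto
      then have "lk m Rho = 0" "lk m Tau = 0" using m unfolding std_def KC_def by auto
      then have "pw (x(Rho := 0, Tau := 0)) m = pw x m"
        by (intro pw_cong_keys) (auto simp: in_keys_iff)
      then show "c m * pw (x(Rho := 0, Tau := 0)) m = c m * pw x m" by simp
    qed
    finally show "(\<Sum>m\<in>KC. c m * pw x m) = 0" by simp
  qed
  have "K = {}"
  proof (rule ccontr)
    assume "K \<noteq> {}"
    then obtain m where m: "m \<in> K" by blast
    then have "c m = 0" using part cA cB cC by blast
    then show False using m by (simp add: K_def c_def in_keys_iff)
  qed
  then show ?thesis by (simp add: K_def)
qed

lemma sum3: "(\<Sum>i<(3::nat). F i) = F 0 + F 1 + F 2"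
proof -
  have "{..<(3::nat)} = {0, 1, 2}" by auto
  then show ?thesis by (simp add: add.assoc)
qed

lemma in_ideal3: "in_ideal [a, b, c] p \<longleftrightarrow> (\<exists>x y z. p = x * a + y * b + z * c)"
proof
  assume "in_ideal [a, b, c] p"
  then obtain f where "p = (\<Sum>i<length [a, b, c]. f i * [a, b, c] ! i)" unfolding in_ideal_def by blast
  then have "p = f 0 * a + f 1 * b + f 2 * c" by (simp add: lessThan_nat_numeral numeral_2_eq_2)
  then show "\<exists>x y z. p = x * a + y * b + z * c" by blast
next
  assume "\<exists>x y z. p = x * a + y * b + z * c"
  then obtain x y z where p: "p = x * a + y * b + z * c" by blast
  define f where "f i = [x, y, z] ! i" for i
  have "p = (\<Sum>i<length [a, b, c]. f i * [a, b, c] ! i)"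
    by (simp add: p f_def lessThan_nat_numeral numeral_2_eq_2)
  then show "in_ideal [a, b, c] p" unfolding in_ideal_def by blast
qed

lemma tgt_ideal_iff: "in_ideal tgt_rels p \<longleftrightarrow> (\<exists>x y z. p = x * (Var Q1 * Var L1) + y * (Var Q2 * Var L2) + z * (Var Q3 * Var L3))"
  by (simp add: tgt_rels_def in_ideal3)

lemma src_ideal_iff: "in_ideal src_rels p \<longleftrightarrow> (\<exists>x y z. p = x * (Var Tau ^ 2 - Var Rho * Var Sig2) + y * (Var Tau * Var Sig3) + z * (Var Rho * Var Sig3))"
  by (simp add: src_rels_def in_ideal3)

lemma cert1: "in_ideal tgt_rels (phi Tau ^ 2 - phi Rho * phi Sig2)"
  unfolding tgt_ideal_iff
  apply (rule exI[of _ "(- 6 * Var Q3 * Var L3 - 2 * Var Q3 * Var L2 + 2 * Var Q3 * Var L1 - 2 * Var Q2 * Var L3 - 6 * Var Q2 * Var L2 + 2 * Var Q2 * Var L1 + 2 * Var Q1 * Var L3 + 2 * Var Q1 * Var L2 - Var Q1 * Var L1)"])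
  apply (rule exI[of _ "(- 6 * Var Q3 * Var L3 + 2 * Var Q3 * Var L2 - 2 * Var Q3 * Var L1 + 2 * Var Q2 * Var L3 - Var Q2 * Var L2 + 2 * Var Q2 * Var L1 - 2 * Var Q1 * Var L3 + 2 * Var Q1 * Var L2)"])
  apply (rule exI[of _ "(- Var Q3 * Var L3 + 2 * Var Q3 * Var L2 + 2 * Var Q3 * Var L1 + 2 * Var Q2 * Var L3 - 2 * Var Q2 * Var L1 + 2 * Var Q1 * Var L3 - 2 * Var Q1 * Var L2)"])
  by (simp add: algebra_simps power2_eq_square power3_eq_cube)

lemma cert2: "in_ideal tgt_rels (phi Tau * phi Sig3)"
  unfolding tgt_ideal_iff
  apply (rule exI[of _ "(- Var L2 * Var L3 ^ 2 + Var L2 ^ 2 * Var L3)"])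
  apply (rule exI[of _ "(Var L1 * Var L3 ^ 2 - Var L1 ^ 2 * Var L3)"])
  apply (rule exI[of _ "(- Var L1 * Var L2 ^ 2 + Var L1 ^ 2 * Var L2)"])
  by (simp add: algebra_simps power2_eq_square power3_eq_cube)

lemma cert3: "in_ideal tgt_rels (phi Rho * phi Sig3)"
  unfolding tgt_ideal_iff
  apply (rule exI[of _ "(- 2 * Var Q3 * Var L2 * Var L3 - 2 * Var Q2 * Var L2 * Var L3 + Var Q1 * Var L2 * Var L3)"])
  apply (rule exI[of _ "(- 2 * Var Q3 * Var L1 * Var L3 + Var Q2 * Var L1 * Var L3)"])
  apply (rule exI[of _ "(Var Q3 * Var L1 * Var L2)"])
  by (simp add: algebra_simps power2_eq_square power3_eq_cube)

lemma in_ideal_0: "in_ideal gs 0"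
  unfolding in_ideal_def by (rule exI[of _ "\<lambda>_. 0"]) simp

lemma in_ideal_add: "in_ideal gs p \<Longrightarrow> in_ideal gs q \<Longrightarrow> in_ideal gs (p + q)"
  unfolding in_ideal_def
proof (elim exE)
  fix c d assume "p = (\<Sum>i<length gs. c i * gs ! i)" "q = (\<Sum>i<length gs. d i * gs ! i)"
  then have "p + q = (\<Sum>i<length gs. (c i + d i) * gs ! i)"
    by (simp add: sum.distrib distrib_right)
  then show "\<exists>c. p + q = (\<Sum>i<length gs. c i * gs ! i)" by (rule exI[of _ "\<lambda>i. c i + d i"])
qed

lemma in_ideal_mult: "in_ideal gs p \<Longrightarrow> in_ideal gs (r * p)"
  unfolding in_ideal_def
proof (elim exE)
  fix c assume "p = (\<Sum>i<length gs. c i * gs ! i)"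
  then have "r * p = (\<Sum>i<length gs. (r * c i) * gs ! i)"
    by (simp add: sum_distrib_left mult.assoc)
  then show "\<exists>c. r * p = (\<Sum>i<length gs. c i * gs ! i)" by (rule exI[of _ "\<lambda>i. r * c i"])
qed

lemma in_ideal_uminus: "in_ideal gs p \<Longrightarrow> in_ideal gs (- p)"
  using in_ideal_mult[of gs p "- 1"] by simp

lemma in_ideal_diff: "in_ideal gs p \<Longrightarrow> in_ideal gs q \<Longrightarrow> in_ideal gs (p - q)"
  using in_ideal_add[of gs p "- q"] in_ideal_uminus[of gs q] by simp

lemma in_ideal_sum: "(\<And>i. i \<in> I \<Longrightarrow> in_ideal gs (f i)) \<Longrightarrow> in_ideal gs (sum f I)"
  by (induction I rule: infinite_finite_induct) (simp_all add: in_ideal_0 in_ideal_add)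

lemma in_ideal3_intro: "p = x * a + y * b + z * c \<Longrightarrow> in_ideal [a, b, c] p"
  by (auto simp: in_ideal3)

lemma src_to_tgt: "in_ideal src_rels P \<Longrightarrow> in_ideal tgt_rels (subst_cp phi P)"
proof -
  assume "in_ideal src_rels P"
  then obtain x y z where P: "P = x * (Var Tau ^ 2 - Var Rho * Var Sig2) + y * (Var Tau * Var Sig3) + z * (Var Rho * Var Sig3)"
    by (auto simp: src_ideal_iff)
  have "subst_cp phi P = subst_cp phi x * (phi Tau ^ 2 - phi Rho * phi Sig2)
     + subst_cp phi y * (phi Tau * phi Sig3) + subst_cp phi z * (phi Rho * phi Sig3)"
    by (simp only: P subst_add subst_mult subst_diff subst_pow subst_Var)
  then show ?thesis
    using cert1 cert2 cert3 by (simp add: in_ideal_add in_ideal_mult)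
qed

lemma ev_tgt_ideal: "in_ideal tgt_rels r \<Longrightarrow> tgt_ok y \<Longrightarrow> ev y r = 0"
  by (auto simp: tgt_ideal_iff tgt_ok_def)

lemma src_ideal_van: "in_ideal src_rels P \<Longrightarrow> tgt_ok y \<Longrightarrow> ev (\<lambda>v. ev y (phi v)) P = 0"
  using ev_tgt_ideal[OF src_to_tgt] by (simp add: ev_subst[symmetric])

lemma sg_add1: "sg (a + b) (1::complex) = sg a 1 * sg b 1"
  by (simp add: mult_single)

lemma sg_var_pow: "(sg (sg v k) (1::complex) :: 'v cpoly) = Var v ^ k"
proof (induction k)
  case 0 then show ?case by simp
next
  case (Suc k)
  have "sg v (Suc k) = sg v 1 + sg v k" by (simp flip: single_add)
  then show ?case using Suc by (simp add: sg_add1 Var_def)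
qed

lemma UNIV_src: "(UNIV :: src set) = {B, Sig1, Rho, Sig2, Tau, Sig3}"
  by (auto intro: src.exhaust)

lemma wdeg_src: "wdeg src_wt m = lk m B + lk m Sig1 + 2 * lk m Rho + 2 * lk m Sig2 + 2 * lk m Tau + 3 * lk m Sig3"
proof -
  have "wdeg src_wt m = (\<Sum>v\<in>UNIV. lk m v * src_wt v)"
    unfolding wdeg_def
    by (rule sum.mono_neutral_left) (auto simp: in_keys_iff, simp add: UNIV_src)
  also have "\<dots> = lk m B + lk m Sig1 + 2 * lk m Rho + 2 * lk m Sig2 + 2 * lk m Tau + 3 * lk m Sig3"
    by (simp add: UNIV_src)
  finally show ?thesis .
qed

definition redm :: "(src \<Rightarrow>\<^sub>0 nat) \<Rightarrow> src cpoly" where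
  "redm m = (if std m then sg m 1 else if lk m Sig3 \<noteq> 0 then 0
     else sg (m - sg Tau (2 * (lk m Tau div 2)) + sg Rho (lk m Tau div 2) + sg Sig2 (lk m Tau div 2)) 1)"

lemma redm_std: "std m \<Longrightarrow> redm m = sg m 1"
  by (simp add: redm_def)

lemma redm_keys: "ks (redm m) \<subseteq> {m'. std m' \<and> wdeg src_wt m' = wdeg src_wt m}"
proof (cases "std m")
  case True then show ?thesis by (simp add: redm_def)
next
  case False
  show ?thesis
  proof (cases "lk m Sig3 \<noteq> 0")
    case True with False show ?thesis by (simp add: redm_def)
  next
    case S3: False
    define k where "k = lk m Tau div 2"
    define m' where "m' = m - sg Tau (2 * k) + sg Rho k + sg Sig2 k"
    have le: "2 * k \<le> lk m Tau" by (simp add: k_def)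
    have "std m'" using S3
      by (simp add: m'_def std_def lookup_add lookup_minus lookup_single k_def)
    moreover have "wdeg src_wt m' = wdeg src_wt m"
      using le by (simp add: wdeg_src m'_def lookup_add lookup_minus lookup_single)
    ultimately show ?thesis using False S3 by (simp add: redm_def m'_def k_def)
  qed
qed

lemma redm_ideal: "in_ideal src_rels (sg m 1 - redm m)"
proof (cases "std m")
  case True then show ?thesis by (simp add: redm_def in_ideal_0)
next
  case False
  show ?thesis
  proof (cases "lk m Sig3 \<noteq> 0")
    case S3: True
    then have red0: "redm m = 0" using False by (simp add: redm_def)
    have "lk m Tau \<noteq> 0 \<or> lk m Rho \<noteq> 0" using False S3 by (auto simp: std_def)
    then show ?thesis
    proof
      assume T: "lk m Tau \<noteq> 0"
      define m0 where "m0 = m - sg Tau 1 - sg Sig3 1"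
      have eq: "m = m0 + sg Tau 1 + sg Sig3 1"
        unfolding m0_def using T S3
        by (intro poly_mapping_eqI) (auto simp: lookup_add lookup_minus lookup_single when_def)
      have "sg m (1::complex) = sg m0 1 * sg (sg Tau 1) 1 * sg (sg Sig3 1) 1"
        by (subst eq) (simp only: sg_add1)
      then have "sg m (1::complex) = sg m0 1 * (Var Tau * Var Sig3)"
        by (simp add: Var_def mult.assoc)
      then show ?thesis unfolding red0 src_rels_def
        by (intro in_ideal3_intro[where x = 0 and z = 0 and y = "sg m0 1"]) simp
    next
      assume R: "lk m Rho \<noteq> 0"
      define m0 where "m0 = m - sg Rho 1 - sg Sig3 1"
      have eq: "m = m0 + sg Rho 1 + sg Sig3 1"
        unfolding m0_def using R S3
        by (intro poly_mapping_eqI) (auto simp: lookup_add lookup_minus lookup_single when_def)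
      have "sg m (1::complex) = sg m0 1 * sg (sg Rho 1) 1 * sg (sg Sig3 1) 1"
        by (subst eq) (simp only: sg_add1)
      then have "sg m (1::complex) = sg m0 1 * (Var Rho * Var Sig3)"
        by (simp add: Var_def mult.assoc)
      then show ?thesis unfolding red0 src_rels_def
        by (intro in_ideal3_intro[where x = 0 and y = 0 and z = "sg m0 1"]) simp
    qed
  next
    case S3: False
    define k where "k = lk m Tau div 2"
    define m0 where "m0 = m - sg Tau (2 * k)"
    define m' where "m' = m - sg Tau (2 * k) + sg Rho k + sg Sig2 k"
    have red: "redm m = sg m' 1" using False S3 by (simp add: redm_def m'_def k_def)
    have le: "2 * k \<le> lk m Tau" by (simp add: k_def)
    have eq: "m = m0 + sg Tau (2 * k)"
      unfolding m0_def using le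
      by (intro poly_mapping_eqI) (auto simp: lookup_add lookup_minus lookup_single when_def)
    have e1: "sg m (1::complex) = sg m0 1 * (Var Tau ^ 2) ^ k"
      by (subst eq) (simp only: sg_add1 sg_var_pow power_mult)
    have e2: "sg m' (1::complex) = sg m0 1 * (Var Rho * Var Sig2) ^ k"
      unfolding m'_def m0_def by (simp only: sg_add1 sg_var_pow power_mult_distrib mult.assoc)
    obtain S where S: "(Var Tau ^ 2) ^ k - (Var Rho * Var Sig2) ^ k
        = ((Var Tau ^ 2 :: src cpoly) - Var Rho * Var Sig2) * S"
      using power_diff_sumr2 by blast
    have "sg m 1 - redm m = (sg m0 1 * S) * (Var Tau ^ 2 - Var Rho * Var Sig2)"
      unfolding red e1 e2 by (simp add: right_diff_distrib[symmetric] S mult_ac)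
    then show ?thesis unfolding src_rels_def
      by (intro in_ideal3_intro[where y = 0 and z = 0 and x = "sg m0 1 * S"]) simp
  qed
qed

lemma lookup_Const_mult: "lk (Const c * p) m = c * lk p m"
  by (simp add: Const_def flip: mult_map_scale_conv_mult) (simp add: map.rep_eq when_def)

lemma keys_Const_mult: "ks (Const c * p) \<subseteq> ks p"
  by (auto simp: in_keys_iff lookup_Const_mult)

lemma Const_mult_sg: "Const c * sg m (1::complex) = sg m c"
  by (simp add: Const_def mult_single)

definition NF :: "src cpoly \<Rightarrow> src cpoly" where
  "NF P = (\<Sum>m\<in>ks P. Const (lk P m) * redm m)"

lemma NF_keys: "ks (NF P) \<subseteq> {m'. std m' \<and> (\<exists>m\<in>ks P. wdeg src_wt m' = wdeg src_wt m)}"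
proof -
  have "ks (NF P) \<subseteq> (\<Union>m\<in>ks P. ks (Const (lk P m) * redm m))"
    unfolding NF_def by (rule keys_sum)
  also have "\<dots> \<subseteq> (\<Union>m\<in>ks P. ks (redm m))"
    using keys_Const_mult by blast
  also have "\<dots> \<subseteq> {m'. std m' \<and> (\<exists>m\<in>ks P. wdeg src_wt m' = wdeg src_wt m)}"
    using redm_keys by blast
  finally show ?thesis .
qed

lemma P_expand_Const: "P = (\<Sum>m\<in>ks P. Const (lk P m) * sg m (1::complex))"
  by (simp add: Const_mult_sg flip: pm_expand)

lemma NF_ideal: "in_ideal src_rels (P - NF P)"
proof -
  have "P - NF P = (\<Sum>m\<in>ks P. Const (lk P m) * (sg m 1 - redm m))"
    by (subst P_expand_Const) (simp add: NF_def right_diff_distrib sum_subtractf)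
  also have "in_ideal src_rels \<dots>"
    by (intro in_ideal_sum in_ideal_mult redm_ideal)
  finally show ?thesis .
qed

lemma part1: "in_ideal tgt_rels (subst_cp phi P) \<longleftrightarrow> in_ideal src_rels P"
proof
  assume "in_ideal src_rels P" then show "in_ideal tgt_rels (subst_cp phi P)" by (rule src_to_tgt)
next
  assume tg: "in_ideal tgt_rels (subst_cp phi P)"
  have "NF P = 0"
  proof (rule core)
    show "\<forall>m\<in>ks (NF P). std m" using NF_keys by blast
    show "\<forall>y. tgt_ok y \<longrightarrow> ev (\<lambda>v. ev y (phi v)) (NF P) = 0"
    proof (intro allI impI)
      fix y assume y: "tgt_ok y"
      have "ev (\<lambda>v. ev y (phi v)) P = 0"
        using ev_tgt_ideal[OF tg y] by (simp add: ev_subst)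
      moreover have "ev (\<lambda>v. ev y (phi v)) (P - NF P) = 0"
        by (rule src_ideal_van[OF NF_ideal y])
      ultimately show "ev (\<lambda>v. ev y (phi v)) (NF P) = 0" by simp
    qed
  qed
  then show "in_ideal src_rels P" using NF_ideal[of P] by simp
qed

lemma vs: "vector_space (smult_cp :: complex \<Rightarrow> 'v cpoly \<Rightarrow> 'v cpoly)"
  by unfold_locales (simp_all add: smult_cp_def distrib_left distrib_right Const_add Const_mult mult.assoc)

lemma md: "module (smult_cp :: complex \<Rightarrow> 'v cpoly \<Rightarrow> 'v cpoly)"
  using vs by (simp add: module_iff_vector_space)

lemma lookup_smult: "lk (smult_cp c p) m = c * lk p m"
  by (simp add: smult_cp_def lookup_Const_mult)

lemma indep_coord:
  fixes f :: "'i \<Rightarrow> 'v cpoly"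
  assumes one: "\<forall>i\<in>I. lk (f i) (\<mu> i) = 1"
    and zero: "\<forall>i\<in>I. \<forall>j\<in>I. j \<noteq> i \<longrightarrow> lk (f j) (\<mu> i) = 0"
  shows "\<not> module.dependent smult_cp (f ` I)" "inj_on f I"
proof -
  show inj: "inj_on f I"
  proof (rule inj_onI)
    fix i j assume "i \<in> I" "j \<in> I" "f i = f j"
    then show "i = j" using one zero by (metis zero_neq_one)
  qed
  show "\<not> module.dependent smult_cp (f ` I)"
  proof
    assume "module.dependent smult_cp (f ` I)"
    then obtain t u v0 where t: "finite t" "t \<subseteq> f ` I" "(\<Sum>v\<in>t. smult_cp (u v) v) = 0" "v0 \<in> t" "u v0 \<noteq> 0"
      unfolding module.dependent_explicit[OF md] by blast
    obtain i0 where i0: "i0 \<in> I" "v0 = f i0" using t by blast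
    have "0 = lk (\<Sum>v\<in>t. smult_cp (u v) v) (\<mu> i0)" using t by simp
    also have "\<dots> = (\<Sum>v\<in>t. u v * lk v (\<mu> i0))" by (simp add: lookup_sum lookup_smult)
    also have "\<dots> = u v0 * lk v0 (\<mu> i0) + (\<Sum>v\<in>t - {v0}. u v * lk v (\<mu> i0))"
      using t by (simp add: sum.remove)
    also have "(\<Sum>v\<in>t - {v0}. u v * lk v (\<mu> i0)) = 0"
    proof (rule sum.neutral, rule ballI)
      fix v assume v: "v \<in> t - {v0}"
      then obtain j where j: "j \<in> I" "v = f j" using t by blast
      then have "j \<noteq> i0" using v i0 by auto
      then show "u v * lk v (\<mu> i0) = 0" using zero j i0 by simp
    qed
    finally show False using one i0 t by simp
  qed
qed

definition mk :: "nat \<Rightarrow> nat \<Rightarrow> nat \<Rightarrow> nat \<Rightarrow> nat \<Rightarrow> nat \<Rightarrow> (src \<Rightarrow>\<^sub>0 nat)" where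
  "mk a b c d e f = sg B a + sg Sig1 b + sg Rho c + sg Sig2 d + sg Tau e + sg Sig3 f"

lemma lk_mk [simp]:
  "lk (mk a b c d e f) B = a" "lk (mk a b c d e f) Sig1 = b" "lk (mk a b c d e f) Rho = c"
  "lk (mk a b c d e f) Sig2 = d" "lk (mk a b c d e f) Tau = e" "lk (mk a b c d e f) Sig3 = f"
  by (simp_all add: mk_def lookup_add lookup_single)

lemma mk_surj: "m = mk (lk m B) (lk m Sig1) (lk m Rho) (lk m Sig2) (lk m Tau) (lk m Sig3)"
proof (rule poly_mapping_eqI)
  fix v show "lk m v = lk (mk (lk m B) (lk m Sig1) (lk m Rho) (lk m Sig2) (lk m Tau) (lk m Sig3)) v"
    by (cases v) simp_all
qed

lemma finite_Md: "finite {m. wdeg src_wt m = d}"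
proof -
  let ?A = "{..d} \<times> {..d} \<times> {..d} \<times> {..d} \<times> {..d} \<times> {..d}"
  have "{m. wdeg src_wt m = d} \<subseteq> (\<lambda>(a, b, c, e, f, g). mk a b c e f g) ` ?A"
  proof
    fix m assume "m \<in> {m. wdeg src_wt m = d}"
    then have w: "wdeg src_wt m = d" by simp
    have "(lk m B, lk m Sig1, lk m Rho, lk m Sig2, lk m Tau, lk m Sig3) \<in> ?A"
      using w by (simp add: wdeg_src)
    then show "m \<in> (\<lambda>(a, b, c, e, f, g). mk a b c e f g) ` ?A"
    proof (rule rev_image_eqI)
      show "m = (\<lambda>(a, b, c, e, f, g). mk a b c e f g) (lk m B, lk m Sig1, lk m Rho, lk m Sig2, lk m Tau, lk m Sig3)"
        by (simp only: prod.case) (rule mk_surj)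
    qed
  qed
  moreover have "finite ((\<lambda>(a, b, c, e, f, g). mk a b c e f g) ` ?A)" by simp
  ultimately show ?thesis by (rule finite_subset)
qed

lemma dim_homog: "vector_space.dim smult_cp (homog_part src_wt d) = card {m. wdeg src_wt m = d}"
proof (rule vector_space.dim_unique[OF vs])
  let ?M = "{m. wdeg src_wt m = d}"
  let ?f = "\<lambda>m. sg m (1::complex)"
  show "?f ` ?M \<subseteq> homog_part src_wt d" by (auto simp: homog_part_def)
  show "homog_part src_wt d \<subseteq> module.span smult_cp (?f ` ?M)"
  proof
    fix p assume p: "p \<in> homog_part src_wt d"
    have "p = (\<Sum>m\<in>ks p. smult_cp (lk p m) (?f m))"
      unfolding smult_cp_def by (rule P_expand_Const)
    also have "\<dots> \<in> module.span smult_cp (?f ` ?M)"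
      using p by (intro module.span_sum[OF md] module.span_scale[OF md] module.span_base[OF md])
        (auto simp: homog_part_def)
    finally show "p \<in> module.span smult_cp (?f ` ?M)" .
  qed
  have "\<not> module.dependent smult_cp (?f ` ?M) \<and> inj_on ?f ?M"
    using indep_coord[of ?M ?f "\<lambda>m. m"] by (simp add: lookup_single)
  then show "\<not> module.dependent smult_cp (?f ` ?M)" "card (?f ` ?M) = card ?M"
    by (simp_all add: card_image)
qed

lemma NF_zero_if_ideal: "in_ideal src_rels p \<Longrightarrow> NF p = 0"
proof (rule core)
  assume p: "in_ideal src_rels p"
  show "\<forall>m\<in>ks (NF p). std m" using NF_keys by blast
  show "\<forall>y. tgt_ok y \<longrightarrow> ev (\<lambda>v. ev y (phi v)) (NF p) = 0"
  proof (intro allI impI)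
    fix y assume y: "tgt_ok y"
    have "ev (\<lambda>v. ev y (phi v)) p = 0" by (rule src_ideal_van[OF p y])
    moreover have "ev (\<lambda>v. ev y (phi v)) (p - NF p) = 0"
      by (rule src_ideal_van[OF NF_ideal y])
    ultimately show "ev (\<lambda>v. ev y (phi v)) (NF p) = 0" by simp
  qed
qed

lemma dim_ideal: "vector_space.dim smult_cp (homog_part src_wt d \<inter> {p. in_ideal src_rels p})
   = card {m. wdeg src_wt m = d \<and> \<not> std m}"
proof (rule vector_space.dim_unique[OF vs])
  let ?M = "{m. wdeg src_wt m = d \<and> \<not> std m}"
  let ?f = "\<lambda>m. sg m (1::complex) - redm m"
  show "?f ` ?M \<subseteq> homog_part src_wt d \<inter> {p. in_ideal src_rels p}"
  proof
    fix p assume "p \<in> ?f ` ?M"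
    then obtain m where m: "m \<in> ?M" "p = ?f m" by blast
    have "ks p \<subseteq> {m} \<union> ks (redm m)" using m keys_diff[of "sg m 1" "redm m"] by simp
    then have "p \<in> homog_part src_wt d" using redm_keys[of m] m by (auto simp: homog_part_def)
    moreover have "in_ideal src_rels p" using m redm_ideal by simp
    ultimately show "p \<in> homog_part src_wt d \<inter> {p. in_ideal src_rels p}" by simp
  qed
  show "homog_part src_wt d \<inter> {p. in_ideal src_rels p} \<subseteq> module.span smult_cp (?f ` ?M)"
  proof
    fix p assume p: "p \<in> homog_part src_wt d \<inter> {p. in_ideal src_rels p}"
    then have "NF p = 0" by (simp add: NF_zero_if_ideal)
    then have "p = p - NF p" by simp
    also have "\<dots> = (\<Sum>m\<in>ks p. smult_cp (lk p m) (?f m))"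
      by (subst P_expand_Const) (simp add: NF_def smult_cp_def right_diff_distrib sum_subtractf)
    also have "\<dots> \<in> module.span smult_cp (?f ` ?M)"
    proof (intro module.span_sum[OF md] module.span_scale[OF md])
      fix m assume "m \<in> ks p"
      then have w: "wdeg src_wt m = d" using p by (auto simp: homog_part_def)
      show "?f m \<in> module.span smult_cp (?f ` ?M)"
      proof (cases "std m")
        case True then show ?thesis by (simp add: redm_std module.span_zero[OF md])
      next
        case False then show ?thesis using w by (intro module.span_base[OF md]) auto
      qed
    qed
    finally show "p \<in> module.span smult_cp (?f ` ?M)" .
  qed
  have lk_red: "lk (redm j) m = 0" if "\<not> std m" for j m
    using redm_keys[of j] that by (auto simp: in_keys_iff)
  have "\<not> module.dependent smult_cp (?f ` ?M) \<and> inj_on ?f ?M"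
    using indep_coord[of ?M ?f "\<lambda>m. m"] by (simp add: lookup_single lookup_minus lk_red)
  then show "\<not> module.dependent smult_cp (?f ` ?M)" "card (?f ` ?M) = card ?M"
    by (simp_all add: card_image)
qed

lemma hilb_card: "hilb_fun src_wt src_rels d = card {m. std m \<and> wdeg src_wt m = d}"
proof -
  have "hilb_fun src_wt src_rels d = card {m. wdeg src_wt m = d} - card {m. wdeg src_wt m = d \<and> \<not> std m}"
    by (simp add: hilb_fun_def dim_homog dim_ideal)
  also have "\<dots> = card ({m. wdeg src_wt m = d} - {m. wdeg src_wt m = d \<and> \<not> std m})"
    by (rule card_Diff_subset[symmetric]) (auto intro: finite_subset[OF _ finite_Md])
  also have "{m. wdeg src_wt m = d} - {m. wdeg src_wt m = d \<and> \<not> std m} = {m. std m \<and> wdeg src_wt m = d}"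
    by auto
  finally show ?thesis .
qed

definition cnt :: "'a set \<Rightarrow> ('a \<Rightarrow> nat) \<Rightarrow> nat \<Rightarrow> nat" where
  "cnt S w d = card {x\<in>S. w x = d}"

definition finlev :: "'a set \<Rightarrow> ('a \<Rightarrow> nat) \<Rightarrow> bool" where
  "finlev S w \<longleftrightarrow> (\<forall>d. finite {x\<in>S. w x = d})"

definition gf :: "'a set \<Rightarrow> ('a \<Rightarrow> nat) \<Rightarrow> complex fps" where
  "gf S w = Abs_fps (\<lambda>d. of_nat (cnt S w d))"

lemma times_level:
  fixes wa :: "'a \<Rightarrow> nat" and wb :: "'b \<Rightarrow> nat"
  shows "{p\<in>S \<times> T. wa (fst p) + wb (snd p) = d} = (\<Union>k\<in>{..d}. {x\<in>S. wa x = k} \<times> {y\<in>T. wb y = d - k})"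
proof
  show "{p\<in>S \<times> T. wa (fst p) + wb (snd p) = d} \<subseteq> (\<Union>k\<in>{..d}. {x\<in>S. wa x = k} \<times> {y\<in>T. wb y = d - k})"
  proof
    fix p assume p: "p \<in> {p\<in>S \<times> T. wa (fst p) + wb (snd p) = d}"
    show "p \<in> (\<Union>k\<in>{..d}. {x\<in>S. wa x = k} \<times> {y\<in>T. wb y = d - k})"
      by (rule UN_I[of "wa (fst p)"]) (use p in \<open>auto simp: mem_Times_iff\<close>)
  qed
qed auto

lemma finlev_times:
  assumes "finlev S wa" "finlev T wb"
  shows "finlev (S \<times> T) (\<lambda>p. wa (fst p) + wb (snd p))"
  using assms unfolding finlev_def times_level by auto

lemma cnt_times:
  assumes "finlev S wa" "finlev T wb"
  shows "cnt (S \<times> T) (\<lambda>p. wa (fst p) + wb (snd p)) d = (\<Sum>k\<le>d. cnt S wa k * cnt T wb (d - k))"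
proof -
  have "cnt (S \<times> T) (\<lambda>p. wa (fst p) + wb (snd p)) d
     = card (\<Union>k\<in>{..d}. {x\<in>S. wa x = k} \<times> {y\<in>T. wb y = d - k})"
    unfolding cnt_def times_level ..
  also have "\<dots> = (\<Sum>k\<le>d. card ({x\<in>S. wa x = k} \<times> {y\<in>T. wb y = d - k}))"
    using assms unfolding finlev_def by (intro card_UN_disjoint) auto
  also have "\<dots> = (\<Sum>k\<le>d. cnt S wa k * cnt T wb (d - k))"
    by (simp add: cnt_def card_cartesian_product)
  finally show ?thesis .
qed

lemma gf_times:
  assumes "finlev S wa" "finlev T wb"
  shows "gf (S \<times> T) (\<lambda>p. wa (fst p) + wb (snd p)) = gf S wa * gf T wb"
proof (rule fps_ext)
  fix d
  show "fps_nth (gf (S \<times> T) (\<lambda>p. wa (fst p) + wb (snd p))) d = fps_nth (gf S wa * gf T wb) d"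
    by (simp add: gf_def fps_mult_nth cnt_times[OF assms] atLeast0AtMost)
qed

lemma sum_level:
  "{x\<in>S <+> T. w x = d} = Inl ` {x\<in>S. w (Inl x) = d} \<union> Inr ` {x\<in>T. w (Inr x) = d}"
  by auto

lemma finlev_plus:
  assumes "finlev S (\<lambda>x. w (Inl x))" "finlev T (\<lambda>x. w (Inr x))"
  shows "finlev (S <+> T) w"
  using assms unfolding finlev_def sum_level by auto

lemma gf_plus:
  assumes "finlev S (\<lambda>x. w (Inl x))" "finlev T (\<lambda>x. w (Inr x))"
  shows "gf (S <+> T) w = gf S (\<lambda>x. w (Inl x)) + gf T (\<lambda>x. w (Inr x))"
proof (rule fps_ext)
  fix d
  have "cnt (S <+> T) w d = cnt S (\<lambda>x. w (Inl x)) d + cnt T (\<lambda>x. w (Inr x)) d"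
    unfolding cnt_def sum_level
    using assms unfolding finlev_def
    by (subst card_Un_disjoint) (auto simp: card_image)
  then show "fps_nth (gf (S <+> T) w) d = fps_nth (gf S (\<lambda>x. w (Inl x)) + gf T (\<lambda>x. w (Inr x))) d"
    by (simp add: gf_def)
qed

lemma finlev_mult:
  assumes "k > 0" shows "finlev (UNIV :: nat set) (\<lambda>n. k * n)"
  unfolding finlev_def
proof
  fix d
  have "{x \<in> (UNIV :: nat set). k * x = d} \<subseteq> {..d}" using assms by auto
  then show "finite {x \<in> (UNIV :: nat set). k * x = d}" by (rule finite_subset) simp
qed

lemma gf_mult:
  assumes "k > 0" shows "gf (UNIV :: nat set) (\<lambda>n. k * n) * (1 - fps_X ^ k) = 1"
proof -
  have c: "cnt (UNIV :: nat set) (\<lambda>n. k * n) d = (if k dvd d then 1 else 0)" for d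
  proof (cases "k dvd d")
    case True
    then obtain q where "d = k * q" by blast
    then have "{x \<in> (UNIV :: nat set). k * x = d} = {q}" using assms by auto
    then show ?thesis using True by (simp add: cnt_def)
  next
    case False
    then have "{x \<in> (UNIV :: nat set). k * x = d} = {}" by auto
    then show ?thesis using False by (simp add: cnt_def)
  qed
  let ?G = "gf (UNIV :: nat set) (\<lambda>n. k * n)"
  show ?thesis
  proof (rule fps_ext)
    fix n
    have "fps_nth (?G * (1 - fps_X ^ k)) n = fps_nth ?G n - fps_nth (fps_X ^ k * ?G) n"
      by (simp add: algebra_simps)
    also have "\<dots> = (if n = 0 then 1 else 0)"
    proof (cases "n < k")
      case True
      then have "(k dvd n) = (n = 0)" using assms by (auto dest: dvd_imp_le)
      then show ?thesis using True by (simp add: fps_X_power_mult_nth gf_def c)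
    next
      case False
      then have n: "n = (n - k) + k" by simp
      have "(k dvd n) = (k dvd (n - k))" by (subst n) (simp only: dvd_add_left_iff dvd_refl)
      then show ?thesis using False assms by (simp add: fps_X_power_mult_nth gf_def c)
    qed
    finally show "fps_nth (?G * (1 - fps_X ^ k)) n = fps_nth (1 :: complex fps) n" by simp
  qed
qed

lemma finlev_id: "finlev (UNIV :: nat set) (\<lambda>n. n)"
  using finlev_mult[of 1] by simp

lemma gf_id: "gf (UNIV :: nat set) (\<lambda>n. n) * (1 - fps_X) = 1"
  using gf_mult[of 1] by simp

lemma finlev_finite: "finite S \<Longrightarrow> finlev S w"
  by (simp add: finlev_def)

lemma gf_E: "gf {0, 1::nat} (\<lambda>e. 2 * e) = 1 + fps_X ^ 2"
proof (rule fps_ext)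
  fix d
  have "cnt {0, 1::nat} (\<lambda>e. 2 * e) d = (if d = 0 then 1 else 0) + (if d = 2 then 1 else 0)"
  proof -
    consider "d = 0" | "d = 2" | "d \<noteq> 0 \<and> d \<noteq> 2" by blast
    then show ?thesis
    proof cases
      case 1 then have "{x \<in> {0, 1::nat}. 2 * x = d} = {0}" by auto
      then show ?thesis using 1 by (simp add: cnt_def)
    next
      case 2 then have "{x \<in> {0, 1::nat}. 2 * x = d} = {1}" by auto
      then show ?thesis using 2 by (simp add: cnt_def)
    next
      case 3 then have "{x \<in> {0, 1::nat}. 2 * x = d} = {}" by auto
      then show ?thesis using 3 by (simp add: cnt_def)
    qed
  qed
  then show "fps_nth (gf {0, 1::nat} (\<lambda>e. 2 * e)) d = fps_nth (1 + fps_X ^ 2 :: complex fps) d"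
    by (simp add: gf_def fps_X_power_iff)
qed

lemma finlev_C: "finlev {1::nat..} (\<lambda>c. 3 * c)"
  using finlev_mult[of 3] unfolding finlev_def by (auto intro: finite_subset)

lemma gf_C: "gf {1::nat..} (\<lambda>c. 3 * c) = fps_X ^ 3 * gf (UNIV :: nat set) (\<lambda>n. 3 * n)"
proof (rule fps_ext)
  fix d
  have c3: "cnt (UNIV :: nat set) (\<lambda>n. 3 * n) d = (if 3 dvd d then 1 else 0)" for d
  proof (cases "3 dvd d")
    case True
    then obtain q where "d = 3 * q" by blast
    then have "{x \<in> (UNIV :: nat set). 3 * x = d} = {q}" by auto
    then show ?thesis using True by (simp add: cnt_def)
  next
    case False
    then have "{x \<in> (UNIV :: nat set). 3 * x = d} = {}" by auto
    then show ?thesis using False by (simp add: cnt_def)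
  qed
  have cC: "cnt {1::nat..} (\<lambda>c. 3 * c) d = (if 3 dvd d \<and> 3 \<le> d then 1 else 0)"
  proof (cases "3 dvd d \<and> 3 \<le> d")
    case True
    then obtain q where q: "d = 3 * q" by blast
    then have "q \<ge> 1" using True by simp
    then have "{x \<in> {1::nat..}. 3 * x = d} = {q}" using q by auto
    then show ?thesis using True by (simp add: cnt_def)
  next
    case False
    then have e: "{x \<in> {1::nat..}. 3 * x = d} = {}" by auto
    show ?thesis using False unfolding cnt_def e by simp
  qed
  show "fps_nth (gf {1::nat..} (\<lambda>c. 3 * c)) d = fps_nth (fps_X ^ 3 * gf (UNIV :: nat set) (\<lambda>n. 3 * n)) d"
  proof (cases "d < 3")
    case True
    then show ?thesis by (simp only: gf_def fps_nth_Abs_fps cC) (simp add: fps_X_power_mult_nth)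
  next
    case False
    then have n: "d = (d - 3) + 3" by simp
    have "(3 dvd d) = (3 dvd (d - 3))" by (subst n) (simp only: dvd_add_left_iff dvd_refl)
    then show ?thesis using False by (simp only: gf_def fps_nth_Abs_fps cC) (simp add: c3 fps_X_power_mult_nth)
  qed
qed

lemma final_alg:
  fixes a b c x :: "'a::idom"
  assumes "a * (1 - x) = 1" "b * (1 - x ^ 2) = 1" "c * (1 - x ^ 3) = 1"
  shows "a * (a * (b * (b * (1 + x ^ 2)) + b * (x ^ 3 * c))) * ((1 - x) * (1 - x ^ 2) ^ 2 * (1 - x ^ 3))
     = 1 + x + 2 * x ^ 2 + 2 * x ^ 3 + 2 * x ^ 4"
  using assms by algebra

definition W3 :: "nat \<times> nat \<Rightarrow> nat" where "W3 = (\<lambda>p. 2 * fst p + 2 * snd p)"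
definition Wl :: "nat \<times> nat \<times> nat \<Rightarrow> nat" where "Wl = (\<lambda>q. 2 * fst q + W3 (snd q))"
definition Wr :: "nat \<times> nat \<Rightarrow> nat" where "Wr = (\<lambda>q. 2 * fst q + 3 * snd q)"
definition W2 :: "(nat \<times> nat \<times> nat) + (nat \<times> nat) \<Rightarrow> nat" where "W2 = case_sum Wl Wr"
definition W1 :: "nat \<times> ((nat \<times> nat \<times> nat) + (nat \<times> nat)) \<Rightarrow> nat" where "W1 = (\<lambda>r. fst r + W2 (snd r))"
definition W :: "nat \<times> nat \<times> ((nat \<times> nat \<times> nat) + (nat \<times> nat)) \<Rightarrow> nat" where "W = (\<lambda>x. fst x + W1 (snd x))"

definition D3 :: "(nat \<times> nat) set" where "D3 = UNIV \<times> {0, 1}"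
definition Dl :: "(nat \<times> nat \<times> nat) set" where "Dl = UNIV \<times> D3"
definition Dr :: "(nat \<times> nat) set" where "Dr = UNIV \<times> {1..}"
definition D2 :: "((nat \<times> nat \<times> nat) + (nat \<times> nat)) set" where "D2 = Dl <+> Dr"
definition D1 :: "(nat \<times> ((nat \<times> nat \<times> nat) + (nat \<times> nat))) set" where "D1 = UNIV \<times> D2"
definition DD :: "(nat \<times> nat \<times> ((nat \<times> nat \<times> nat) + (nat \<times> nat))) set" where "DD = UNIV \<times> D1"

abbreviation "G k \<equiv> gf (UNIV :: nat set) (\<lambda>n. k * n)"
abbreviation "G1 \<equiv> gf (UNIV :: nat set) (\<lambda>n. n)"

lemma fm2: "finlev (UNIV :: nat set) (\<lambda>n. 2 * n)" by (rule finlev_mult) simp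
lemma fm3: "finlev (UNIV :: nat set) (\<lambda>n. 3 * n)" by (rule finlev_mult) simp

lemma fl3: "finlev D3 W3" unfolding D3_def W3_def
  by (rule finlev_times[OF finlev_mult finlev_finite]) simp_all
lemma gf3: "gf D3 W3 = G 2 * (1 + fps_X ^ 2)" unfolding D3_def W3_def
  by (subst gf_times[OF fm2 finlev_finite]) (simp_all only: gf_E, simp)

lemma fll: "finlev Dl Wl" unfolding Dl_def Wl_def
  by (rule finlev_times[OF finlev_mult fl3]) simp_all
lemma gfl: "gf Dl Wl = G 2 * (G 2 * (1 + fps_X ^ 2))" unfolding Dl_def Wl_def
  by (subst gf_times[OF finlev_mult fl3]) (simp_all add: gf3)

lemma flr: "finlev Dr Wr" unfolding Dr_def Wr_def
  by (rule finlev_times[OF finlev_mult finlev_C]) simp_all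
lemma gfr: "gf Dr Wr = G 2 * (fps_X ^ 3 * G 3)" unfolding Dr_def Wr_def
  by (subst gf_times[OF fm2 finlev_C]) (simp only: gf_C)

lemma fl2: "finlev D2 W2" unfolding D2_def W2_def
  by (rule finlev_plus) (simp_all add: fll flr)
lemma gf2: "gf D2 W2 = G 2 * (G 2 * (1 + fps_X ^ 2)) + G 2 * (fps_X ^ 3 * G 3)"
  unfolding D2_def W2_def
  by (subst gf_plus) (simp_all add: fll flr gfl gfr)

lemma fl1: "finlev D1 W1" unfolding D1_def W1_def
  by (rule finlev_times[OF finlev_id fl2])
lemma gf1: "gf D1 W1 = G1 * (G 2 * (G 2 * (1 + fps_X ^ 2)) + G 2 * (fps_X ^ 3 * G 3))"
  unfolding D1_def W1_def
  by (subst gf_times[OF finlev_id fl2]) (simp only: gf2)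

lemma gfD: "gf DD W = G1 * (G1 * (G 2 * (G 2 * (1 + fps_X ^ 2)) + G 2 * (fps_X ^ 3 * G 3)))"
  unfolding DD_def W_def
  by (subst gf_times[OF finlev_id fl1]) (simp only: gf1)

definition FF :: "nat \<times> nat \<times> ((nat \<times> nat \<times> nat) + (nat \<times> nat)) \<Rightarrow> (src \<Rightarrow>\<^sub>0 nat)" where
  "FF x = (case x of (i, j, Inl (a, b, e)) \<Rightarrow> mk i j a b e 0 | (i, j, Inr (b, c)) \<Rightarrow> mk i j 0 b 0 c)"

lemma mk_eq_iff: "mk a b c d e f = mk a' b' c' d' e' f' \<longleftrightarrow> a = a' \<and> b = b' \<and> c = c' \<and> d = d' \<and> e = e' \<and> f = f'"
  by (metis lk_mk)

lemma FF_props: "x \<in> DD \<Longrightarrow> std (FF x) \<and> wdeg src_wt (FF x) = W x"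
  by (cases x) (auto simp: FF_def DD_def D1_def D2_def Dl_def Dr_def D3_def W_def W1_def W2_def Wl_def Wr_def W3_def
      std_def wdeg_src split: sum.splits)

lemma FF_inj: "inj_on FF DD"
proof (rule inj_onI)
  fix x y assume x: "x \<in> DD" and y: "y \<in> DD" and e: "FF x = FF y"
  obtain i j s where xs: "x = (i, j, s)" by (cases x) auto
  obtain i' j' s' where ys: "y = (i', j', s')" by (cases y) auto
  show "x = y"
    using x y e unfolding xs ys
    by (cases s; cases s') (auto simp: FF_def mk_eq_iff DD_def D1_def D2_def Dr_def)
qed

lemma FF_surj: "std m \<Longrightarrow> m \<in> FF ` DD"
proof -
  assume st: "std m"
  show ?thesis
  proof (cases "lk m Sig3 = 0")
    case True
    have "lk m Tau \<in> {0, 1}" using st by (auto simp: std_def)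
    then have "(lk m B, lk m Sig1, Inl (lk m Rho, lk m Sig2, lk m Tau)) \<in> DD"
      by (auto simp: DD_def D1_def D2_def Dl_def D3_def)
    moreover have "m = FF (lk m B, lk m Sig1, Inl (lk m Rho, lk m Sig2, lk m Tau))"
      using mk_surj[of m] True by (simp add: FF_def)
    ultimately show ?thesis by blast
  next
    case False
    then have z: "lk m Rho = 0" "lk m Tau = 0" using st by (auto simp: std_def)
    have "(lk m B, lk m Sig1, Inr (lk m Sig2, lk m Sig3)) \<in> DD"
      using False by (auto simp: DD_def D1_def D2_def Dr_def)
    moreover have "m = FF (lk m B, lk m Sig1, Inr (lk m Sig2, lk m Sig3))"
      using mk_surj[of m] z by (simp add: FF_def)
    ultimately show ?thesis by blast
  qed
qed

lemma count_eq: "card {m. std m \<and> wdeg src_wt m = d} = cnt DD W d"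
proof -
  have "{m. std m \<and> wdeg src_wt m = d} = FF ` {x\<in>DD. W x = d}"
  proof
    show "{m. std m \<and> wdeg src_wt m = d} \<subseteq> FF ` {x\<in>DD. W x = d}"
    proof
      fix m assume m: "m \<in> {m. std m \<and> wdeg src_wt m = d}"
      then obtain x where x: "x \<in> DD" "m = FF x" using FF_surj by blast
      then show "m \<in> FF ` {x\<in>DD. W x = d}" using FF_props[OF x(1)] m by auto
    qed
    show "FF ` {x\<in>DD. W x = d} \<subseteq> {m. std m \<and> wdeg src_wt m = d}"
      using FF_props by auto
  qed
  moreover have "inj_on FF {x\<in>DD. W x = d}" using FF_inj by (rule inj_on_subset) auto
  ultimately show ?thesis by (simp add: cnt_def card_image)
qed

theorem lemma4p16:
  shows "(\<forall>P :: src cpoly. in_ideal tgt_rels (subst_cp phi P) \<longleftrightarrow> in_ideal src_rels P)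
    \<and> Abs_fps (\<lambda>d. of_nat (hilb_fun src_wt src_rels d) :: complex)
      = (1 + fps_X + 2 * fps_X ^ 2 + 2 * fps_X ^ 3 + 2 * fps_X ^ 4)
        / ((1 - fps_X) * (1 - fps_X ^ 2) ^ 2 * (1 - fps_X ^ 3))"
proof
  show "\<forall>P :: src cpoly. in_ideal tgt_rels (subst_cp phi P) \<longleftrightarrow> in_ideal src_rels P"
    using part1 by blast
  let ?den = "(1 - fps_X) * (1 - fps_X ^ 2) ^ 2 * (1 - fps_X ^ 3) :: complex fps"
  let ?num = "1 + fps_X + 2 * fps_X ^ 2 + 2 * fps_X ^ 3 + 2 * fps_X ^ 4 :: complex fps"
  have H: "Abs_fps (\<lambda>d. of_nat (hilb_fun src_wt src_rels d) :: complex) = gf DD W"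
    by (simp add: gf_def hilb_card count_eq)
  have m: "gf DD W * ?den = ?num"
    unfolding gfD
    by (rule final_alg) (simp_all add: gf_id gf_mult)
  have d0: "fps_nth ?den 0 \<noteq> 0" by simp
  have "?num / ?den = ?num * inverse ?den" by (rule fps_divide_unit[OF d0])
  also have "\<dots> = gf DD W * (?den * inverse ?den)" by (simp add: m[symmetric] mult.assoc)
  also have "\<dots> = gf DD W" by (simp add: inverse_mult_eq_1'[OF d0])
  finally show "Abs_fps (\<lambda>d. of_nat (hilb_fun src_wt src_rels d) :: complex) = ?num / ?den"
    using H by simp
qed


end
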